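(* Let $S_1=\mathbb{R}/2\pi\mathbb{Z}$ and let $u:[0,T)\times S_1\to\mathbb{R}$ be a smooth solution of the Camassa–Holm equation $$\partial_t u-\tfrac14\partial_{txx}u+3\,\partial_x u\,u-\tfrac12\,\partial_{xx}u\,\partial_x u-\tfrac14\,\partial_{xxx}u\,u=0 .$$ On $N=S_1\times\mathbb{R}_{>0}$ with coordinates $(\theta,r)$ and the Euclidean metric in polar coordinates $h=r^2(\mathrm{d}\theta)^2+(\mathrm{d}r)^2$ (i.e. $N\cong\mathbb{R}^2\setminus\{0\}$), define the time-dependent vector field $$v(t,\theta,r)=u(t,\theta)\,\partial_\theta+\tfrac{r}{2}\,\partial_\theta u(t,\theta)\,\partial_r .$$ Then there exists a function $p:[0,T)\times N\to\mathbb{R}$ such that $$\partial_t v+\nabla_v v=-\nabla p,\qquad \operatorname{div}(\rho v)=0,\quad\text{with }\rho(\theta,r)=r^{-4},$$ where $\nabla$ is the Levi-Civita connection of $h$, $\nabla p$ the $h$-gradient, and $\operatorname{div}$ the Euclidean divergence (with respect to the area form $r\,\mathrm{d}r\wedge\mathrm{d}\theta$). Equivalently, $v$ solves the incompressible Euler equation for the density $r^{-4}\,r\,\mathrm{d}r\,\mathrm{d}\theta$.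
   Context: Here $\partial_x$ and $\partial_\theta$ both denote differentiation in the angular variable. The flow $\varphi$ of $u$ and the map $\Psi(\theta,r)=r\sqrt{\partial_\theta\varphi(\theta)}\,e^{i\varphi(\theta)}$ are related by $\partial_t\Psi\circ\Psi^{-1}=v$; this is not needed for the statement. *)

theory Defs
  imports "HOL-Analysis.Analysis"
begin

definition pderiv_dir :: "'a::euclidean_space \<Rightarrow> ('a \<Rightarrow> 'b::real_normed_vector) \<Rightarrow> 'a \<Rightarrow> 'b" where
  "pderiv_dir e f = (\<lambda>x. frechet_derivative f (at x) e)"

definition smooth_on :: "'a::euclidean_space set \<Rightarrow> ('a \<Rightarrow> 'b::real_normed_vector) \<Rightarrow> bool" where
  "smooth_on U f \<longleftrightarrow> open U \<and>
     (\<forall>ds. set ds \<subseteq> Basis \<longrightarrow> (\<forall>x\<in>U. foldr pderiv_dir ds f differentiable (at x)))"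

definition dt :: "(real \<Rightarrow> real \<Rightarrow> real) \<Rightarrow> real \<Rightarrow> real \<Rightarrow> real" where
  "dt u = (\<lambda>t x. deriv (\<lambda>s. u s x) t)"

definition dx :: "(real \<Rightarrow> real \<Rightarrow> real) \<Rightarrow> real \<Rightarrow> real \<Rightarrow> real" where
  "dx u = (\<lambda>t x. deriv (\<lambda>y. u t y) x)"

text \<open>The vector field v = u d_theta + (r/2) u_theta d_r on N = S_1 x R_{>0},
  transported to R^2 \ {0} = C \ {0} via (theta, r) \<mapsto> r e^{i theta}:
  d_theta \<mapsto> i z and d_r \<mapsto> z/|z|, so v(t,z) = u(t,theta) i z + (u_theta(t,theta)/2) z
  with theta = Arg z (u is 2 pi periodic, so any choice of the angle gives the same).\<close>
definition vfield :: "(real \<Rightarrow> real \<Rightarrow> real) \<Rightarrow> real \<Rightarrow> complex \<Rightarrow> complex" where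
  "vfield u t z = complex_of_real (u t (Arg z)) * \<i> * z
                  + complex_of_real (dx u t (Arg z) / 2) * z"

definition divergence :: "(complex \<Rightarrow> complex) \<Rightarrow> complex \<Rightarrow> real" where
  "divergence F z = Re (frechet_derivative F (at z) 1) + Im (frechet_derivative F (at z) \<i>)"

text \<open>d_t v + nabla_v v for the flat (Levi-Civita) connection of the Euclidean metric.\<close>
definition euler_lhs :: "(real \<Rightarrow> real \<Rightarrow> real) \<Rightarrow> real \<Rightarrow> complex \<Rightarrow> complex" where
  "euler_lhs u t z = vector_derivative (\<lambda>s. vfield u s z) (at t)
                     + frechet_derivative (vfield u t) (at z) (vfield u t z)"

end

theory Submission
  imports Defs
begin

abbreviation "D1 \<equiv> pderiv_dir ((1::real), (0::real))"
abbreviation "D2 \<equiv> pderiv_dir ((0::real), (1::real))"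

lemma pd1:
  fixes G :: "real \<times> real \<Rightarrow> real"
  assumes "G differentiable (at (t,x))"
  shows "((\<lambda>s. G (s,x)) has_real_derivative D1 G (t,x)) (at t)"
proof -
  let ?f = "frechet_derivative G (at (t,x))"
  have G: "(G has_derivative ?f) (at (t,x))" using assms frechet_derivative_works by blast
  have P: "((\<lambda>s. (s,x)) has_derivative (\<lambda>h. (h,0))) (at t)"
    by (auto intro!: derivative_eq_intros)
  have C: "((\<lambda>s. G (s,x)) has_derivative (\<lambda>h. ?f (h,0))) (at t)"
    using has_derivative_compose[OF P, of G ?f] G by simp
  have L: "linear ?f" using G has_derivative_linear by blast
  have "?f (h,0) = D1 G (t,x) * h" for h
  proof -
    have "?f (h,0) = ?f (h *\<^sub>R (1,0))" by simp
    also have "\<dots> = h *\<^sub>R ?f (1,0)" using L linear_scale by blast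
    finally show ?thesis by (simp add: pderiv_dir_def)
  qed
  then show ?thesis using C by (simp add: has_field_derivative_def)
qed

lemma pd2:
  fixes G :: "real \<times> real \<Rightarrow> real"
  assumes "G differentiable (at (t,x))"
  shows "((\<lambda>y. G (t,y)) has_real_derivative D2 G (t,x)) (at x)"
proof -
  let ?f = "frechet_derivative G (at (t,x))"
  have G: "(G has_derivative ?f) (at (t,x))" using assms frechet_derivative_works by blast
  have P: "((\<lambda>y. (t,y)) has_derivative (\<lambda>h. (0,h))) (at x)"
    by (auto intro!: derivative_eq_intros)
  have C: "((\<lambda>y. G (t,y)) has_derivative (\<lambda>h. ?f (0,h))) (at x)"
    using has_derivative_compose[OF P, of G ?f] G by simp
  have L: "linear ?f" using G has_derivative_linear by blast
  have "?f (0,h) = D2 G (t,x) * h" for h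
  proof -
    have "?f (0,h) = ?f (h *\<^sub>R (0,1))" by simp
    also have "\<dots> = h *\<^sub>R ?f (0,1)" using L linear_scale by blast
    finally show ?thesis by (simp add: pderiv_dir_def)
  qed
  then show ?thesis using C by (simp add: has_field_derivative_def)
qed

lemma schwarz:
  fixes G :: "real \<times> real \<Rightarrow> real"
  assumes U: "open U" "(t,x) \<in> U"
    and dG: "\<And>p. p \<in> U \<Longrightarrow> G differentiable (at p)"
    and d1: "\<And>p. p \<in> U \<Longrightarrow> D1 G differentiable (at p)"
    and d2: "\<And>p. p \<in> U \<Longrightarrow> D2 G differentiable (at p)"
    and c21: "isCont (D2 (D1 G)) (t,x)"
    and c12: "isCont (D1 (D2 G)) (t,x)"
  shows "D1 (D2 G) (t,x) = D2 (D1 G) (t,x)"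
proof (rule ccontr)
  let ?a = "D2 (D1 G) (t,x)" and ?b = "D1 (D2 G) (t,x)"
  assume ne: "?b \<noteq> ?a"
  define e where "e = \<bar>?a - ?b\<bar> / 2"
  have e: "e > 0" using ne by (simp add: e_def)
  obtain d0 where d0: "d0 > 0" "ball (t,x) d0 \<subseteq> U" using U open_contains_ball by blast
  obtain d1' where d1': "d1' > 0" "\<And>p. dist p (t,x) < d1' \<Longrightarrow> dist (D2 (D1 G) p) ?a < e"
    using c21 e unfolding continuous_at_eps_delta by blast
  obtain d2' where d2': "d2' > 0" "\<And>p. dist p (t,x) < d2' \<Longrightarrow> dist (D1 (D2 G) p) ?b < e"
    using c12 e unfolding continuous_at_eps_delta by blast
  define h where "h = min d0 (min d1' d2') / 3"
  have h: "h > 0" "h < d0" "h < d1'" "h < d2'" using d0 d1' d2' by (auto simp: h_def)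
  have inU: "(s,y) \<in> U" if "t \<le> s" "s \<le> t + h" "x \<le> y" "y \<le> x + h" for s y
  proof -
    have "dist (s,y) (t,x) \<le> \<bar>s - t\<bar> + \<bar>y - x\<bar>"
      by (simp add: dist_Pair_Pair dist_real_def sqrt_sum_squares_le_sum_abs)
    also have "\<dots> \<le> 2*h" using that by auto
    finally have "dist (s,y) (t,x) < d0" using h d0 d1' d2' by (auto simp: h_def)
    then show ?thesis using d0 by (auto simp: dist_commute)
  qed
  have close: "dist (s,y) (t,x) < min d1' d2'" if "t \<le> s" "s \<le> t + h" "x \<le> y" "y \<le> x + h" for s y
  proof -
    have "dist (s,y) (t,x) \<le> \<bar>s - t\<bar> + \<bar>y - x\<bar>"
      by (simp add: dist_Pair_Pair dist_real_def sqrt_sum_squares_le_sum_abs)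
    also have "\<dots> \<le> 2*h" using that by auto
    finally show ?thesis using h d0 d1' d2' by (auto simp: h_def)
  qed
  define \<Delta> where "\<Delta> = G (t+h, x+h) - G (t+h, x) - G (t, x+h) + G (t, x)"
  have "\<exists>\<xi>. t < \<xi> \<and> \<xi> < t + h \<and> (G (t+h, x+h) - G (t+h, x)) - (G (t, x+h) - G (t, x))
          = ((t+h) - t) * (D1 G (\<xi>, x+h) - D1 G (\<xi>, x))"
    apply (rule MVT2[where f = "\<lambda>s. G (s, x+h) - G (s, x)"])
    using h apply simp
    apply (intro DERIV_diff pd1 dG inU) using h by auto
  then obtain \<xi> where xi: "t < \<xi>" "\<xi> < t + h" "\<Delta> = h * (D1 G (\<xi>, x+h) - D1 G (\<xi>, x))"
    by (auto simp: \<Delta>_def algebra_simps)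
  have "\<exists>\<eta>. x < \<eta> \<and> \<eta> < x + h \<and> D1 G (\<xi>, x+h) - D1 G (\<xi>, x) = ((x+h) - x) * D2 (D1 G) (\<xi>, \<eta>)"
    apply (rule MVT2[where f = "\<lambda>y. D1 G (\<xi>, y)"])
    using h apply simp
    apply (intro pd2 d1 inU) using h xi by auto
  then obtain \<eta> where eta: "x < \<eta>" "\<eta> < x + h" "\<Delta> = h * h * D2 (D1 G) (\<xi>, \<eta>)"
    using xi by auto
  have "\<exists>\<eta>. x < \<eta> \<and> \<eta> < x + h \<and> (G (t+h, x+h) - G (t, x+h)) - (G (t+h, x) - G (t, x))
          = ((x+h) - x) * (D2 G (t+h, \<eta>) - D2 G (t, \<eta>))"
    apply (rule MVT2[where f = "\<lambda>y. G (t+h, y) - G (t, y)"])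
    using h apply simp
    apply (intro DERIV_diff pd2 dG inU) using h by auto
  then obtain \<eta>' where eta': "x < \<eta>'" "\<eta>' < x + h" "\<Delta> = h * (D2 G (t+h, \<eta>') - D2 G (t, \<eta>'))"
    by (auto simp: \<Delta>_def algebra_simps)
  have "\<exists>\<xi>. t < \<xi> \<and> \<xi> < t + h \<and> D2 G (t+h, \<eta>') - D2 G (t, \<eta>') = ((t+h) - t) * D1 (D2 G) (\<xi>, \<eta>')"
    apply (rule MVT2[where f = "\<lambda>s. D2 G (s, \<eta>')"])
    using h apply simp
    apply (intro pd1 d2 inU) using h eta' by auto
  then obtain \<xi>' where xi': "t < \<xi>'" "\<xi>' < t + h" "\<Delta> = h * h * D1 (D2 G) (\<xi>', \<eta>')"
    using eta' by auto
  have eq: "D2 (D1 G) (\<xi>, \<eta>) = D1 (D2 G) (\<xi>', \<eta>')" using eta(3) xi'(3) h by simp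
  have "dist (D2 (D1 G) (\<xi>, \<eta>)) ?a < e" apply (rule d1'(2)) using close[of \<xi> \<eta>] xi eta by auto
  moreover have "dist (D1 (D2 G) (\<xi>', \<eta>')) ?b < e" apply (rule d2'(2)) using close[of \<xi>' \<eta>'] xi' eta' by auto
  ultimately have "\<bar>D1 (D2 G) (\<xi>', \<eta>') - ?a\<bar> * 2 < \<bar>?a - ?b\<bar>" "\<bar>D1 (D2 G) (\<xi>', \<eta>') - ?b\<bar> * 2 < \<bar>?a - ?b\<bar>"
    using eq by (auto simp: e_def dist_real_def)
  then show False by (auto simp: abs_if split: if_splits)
qed

lemma arg_comp_aux:
  fixes g :: "real \<Rightarrow> real" and f :: "complex \<Rightarrow> complex"
  assumes f: "(f has_field_derivative f') (at z)"
    and der: "\<And>x. (g has_real_derivative g' x) (at x)"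
  shows "((\<lambda>w. g (Im (f w) + c)) has_derivative (\<lambda>h. g' (Im (f z) + c) * Im (f' * h))) (at z)"
proof -
  have A: "((\<lambda>w. Im (f w) + c) has_derivative (\<lambda>h. Im (f' * h))) (at z)"
    using f unfolding has_field_derivative_def
    by (auto intro!: derivative_eq_intros)
  have B: "(g has_derivative (\<lambda>h. g' (Im (f z) + c) * h)) (at (Im (f z) + c))"
    using der unfolding has_field_derivative_def by auto
  show ?thesis using has_derivative_compose[OF A B] by (simp add: o_def)
qed

lemma arg_comp:
  fixes g :: "real \<Rightarrow> real"
  assumes per: "\<And>x. g (x + 2*pi) = g x"
    and der: "\<And>x. (g has_real_derivative g' x) (at x)"
    and z: "z \<noteq> 0"
  shows "((\<lambda>w. g (Arg w)) has_derivative (\<lambda>h. g' (Arg z) * Im (h / z))) (at z)"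
proof (cases "z \<in> \<real>\<^sub>\<le>\<^sub>0")
  case False
  have "((\<lambda>w. g (Im (Ln w) + 0)) has_derivative (\<lambda>h. g' (Im (Ln z) + 0) * Im (inverse z * h))) (at z)"
    by (rule arg_comp_aux[OF has_field_derivative_Ln[OF False] der])
  then have D: "((\<lambda>w. g (Im (Ln w))) has_derivative (\<lambda>h. g' (Arg z) * Im (h / z))) (at z)"
    using z by (simp add: Arg_eq_Im_Ln divide_inverse mult.commute)
  show ?thesis
  proof (rule has_derivative_transform_within_open[OF D, of "- \<real>\<^sub>\<le>\<^sub>0"])
    show "open (- \<real>\<^sub>\<le>\<^sub>0 :: complex set)" by (simp add: open_Compl)
    show "z \<in> - \<real>\<^sub>\<le>\<^sub>0" using False by simp
    fix w :: complex assume "w \<in> - \<real>\<^sub>\<le>\<^sub>0"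
    then have "w \<noteq> 0" by auto
    then show "g (Im (Ln w)) = g (Arg w)" by (simp add: Arg_eq_Im_Ln)
  qed
next
  case True
  then obtain r where r: "z = of_real r" "r \<le> 0" by (auto elim!: nonpos_Reals_cases)
  with z have r0: "r < 0" by auto
  have mz: "-z \<notin> \<real>\<^sub>\<le>\<^sub>0" using r r0 by (auto simp: complex_nonpos_Reals_iff)
  have L: "((\<lambda>w. Ln (-w)) has_field_derivative inverse (-z) * (-1)) (at z)"
  proof -
    have "((\<lambda>w. -w) has_field_derivative -1) (at z)" by (rule DERIV_minus[OF DERIV_ident])
    then show ?thesis using DERIV_chain2[of Ln "inverse (-z)" "\<lambda>w. -w" z "-1" UNIV] has_field_derivative_Ln[OF mz]
      by blast
  qed
  have "((\<lambda>w. g (Im (Ln (-w)) + pi)) has_derivative (\<lambda>h. g' (Im (Ln (-z)) + pi) * Im ((inverse (-z) * (-1)) * h))) (at z)"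
    by (rule arg_comp_aux[OF L der])
  moreover have "Im (Ln (-z)) + pi = Arg z"
    using r r0 by (simp add: Arg_eq_Im_Ln[symmetric] of_real_minus[symmetric] del: of_real_minus)
  ultimately have D: "((\<lambda>w. g (Im (Ln (-w)) + pi)) has_derivative (\<lambda>h. g' (Arg z) * Im (h / z))) (at z)"
    by (simp add: divide_inverse mult.commute)
  show ?thesis
  proof (rule has_derivative_transform_within_open[OF D, of "uminus -` (- \<real>\<^sub>\<le>\<^sub>0)"])
    show "open (uminus -` (- \<real>\<^sub>\<le>\<^sub>0) :: complex set)"
      by (rule continuous_open_vimage) (auto simp: open_Compl intro!: continuous_intros)
    show "z \<in> uminus -` (- \<real>\<^sub>\<le>\<^sub>0)" using mz by simp
    fix w :: complex assume "w \<in> uminus -` (- \<real>\<^sub>\<le>\<^sub>0)"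
    then have w: "w \<noteq> 0" "-w \<noteq> 0" by auto
    have "Arg w = Arg (- (-w))" by simp
    also have "\<dots> = (if Arg (-w) \<le> 0 then Arg (-w) + pi else Arg (-w) - pi)"
      by (rule Arg_minus[OF w(2)])
    finally have "g (Arg w) = g (Arg (-w) + pi)"
      using per[of "Arg (-w) - pi"] by (auto split: if_splits simp: algebra_simps)
    then show "g (Im (Ln (-w)) + pi) = g (Arg w)" using w by (simp add: Arg_eq_Im_Ln)
  qed
qed

definition Aof :: "(real \<Rightarrow> real \<Rightarrow> real) \<Rightarrow> real \<Rightarrow> real \<Rightarrow> real" where
  "Aof u t x = dt (dx u) t x / 2 + (dx u t x)^2 / 4 - (u t x)^2 + u t x * dx (dx u) t x / 2"

lemma core:
  fixes u :: "real \<Rightarrow> real \<Rightarrow> real" and t :: real and z :: complex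
  assumes z: "z \<noteq> 0"
  and H0: "\<And>x. ((\<lambda>y. u t y) has_real_derivative dx u t x) (at x)"
  and H1: "\<And>x. ((\<lambda>y. dx u t y) has_real_derivative dx (dx u) t x) (at x)"
  and H2: "\<And>x. ((\<lambda>y. dx (dx u) t y) has_real_derivative dx (dx (dx u)) t x) (at x)"
  and H3: "\<And>x. ((\<lambda>y. dt (dx u) t y) has_real_derivative dx (dx (dt u)) t x) (at x)"
  and T0: "((\<lambda>s. u s (Arg z)) has_real_derivative dt u t (Arg z)) (at t)"
  and T1: "((\<lambda>s. dx u s (Arg z)) has_real_derivative dt (dx u) t (Arg z)) (at t)"
  and P0: "\<And>x. u t (x + 2*pi) = u t x"
  and P1: "\<And>x. dx u t (x + 2*pi) = dx u t x"
  and P2: "\<And>x. dx (dx u) t (x + 2*pi) = dx (dx u) t x"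
  and P3: "\<And>x. dt (dx u) t (x + 2*pi) = dt (dx u) t x"
  and CH: "\<And>x. dt u t x - 1/4 * dx (dx (dt u)) t x + 3 * dx u t x * u t x
        - 1/2 * dx (dx u) t x * dx u t x - 1/4 * dx (dx (dx u)) t x * u t x = 0"
  shows "((\<lambda>w. - ((Re w)^2 + (Im w)^2) / 2 * Aof u t (Arg w)) has_derivative (\<lambda>h. (- euler_lhs u t z) \<bullet> h)) (at z)"
    "divergence (\<lambda>w. complex_of_real (1 / norm w ^ 4) * vfield u t w) z = 0"
proof -
  define \<theta> where "\<theta> = Arg z"
  define a0 where "a0 = u t \<theta>"
  define a1 where "a1 = dx u t \<theta>"
  define a2 where "a2 = dx (dx u) t \<theta>"
  define a3 where "a3 = dx (dx (dx u)) t \<theta>"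
  define b0 where "b0 = dt u t \<theta>"
  define c1 where "c1 = dt (dx u) t \<theta>"
  define c2 where "c2 = dx (dx (dt u)) t \<theta>"
  have G0: "((\<lambda>w. complex_of_real (u t (Arg w))) has_derivative (\<lambda>h. complex_of_real (a1 * Im (h / z)))) (at z)"
    using has_derivative_of_real[OF arg_comp[OF P0 H0 z]] by (simp add: a1_def \<theta>_def)
  have G1: "((\<lambda>w. complex_of_real (dx u t (Arg w))) has_derivative (\<lambda>h. complex_of_real (a2 * Im (h / z)))) (at z)"
    using has_derivative_of_real[OF arg_comp[OF P1 H1 z]] by (simp add: a2_def \<theta>_def)
  define Dv where "Dv = (\<lambda>h. complex_of_real a0 * \<i> * h + complex_of_real (a1 * Im (h / z)) * \<i> * z
        + complex_of_real (a1 / 2) * h + complex_of_real (a2 * Im (h / z) / 2) * z)"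
  have vf: "vfield u t = (\<lambda>w. complex_of_real (u t (Arg w)) * \<i> * w + complex_of_real (dx u t (Arg w)) / 2 * w)"
    by (auto simp: vfield_def)
  have Dv: "(vfield u t has_derivative Dv) (at z)"
    unfolding vf Dv_def
    apply (rule has_derivative_eq_rhs)
     apply (rule G0 G1 | rule derivative_eq_intros | simp)+
    apply (simp add: a0_def a1_def \<theta>_def algebra_simps)
    done
  have FD: "frechet_derivative (vfield u t) (at z) = Dv" using Dv frechet_derivative_at by metis
  have VDh: "((\<lambda>s. vfield u s z) has_vector_derivative (complex_of_real b0 * \<i> * z + complex_of_real c1 / 2 * z)) (at t)"
  proof -
    have e: "(\<lambda>s. vfield u s z) = (\<lambda>s. complex_of_real (u s \<theta>) * (\<i> * z) + complex_of_real (dx u s \<theta>) * (z / 2))"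
      by (auto simp: vfield_def \<theta>_def)
    show ?thesis unfolding e b0_def c1_def \<theta>_def
      apply (rule has_vector_derivative_eq_rhs)
       apply (rule has_vector_derivative_add[OF has_vector_derivative_mult_left[OF has_vector_derivative_of_real[OF T0]] has_vector_derivative_mult_left[OF has_vector_derivative_of_real[OF T1]]])
      apply simp
      done
  qed
  have VD: "vector_derivative (\<lambda>s. vfield u s z) (at t) = complex_of_real b0 * \<i> * z + complex_of_real c1 / 2 * z"
    using VDh vector_derivative_at by blast
  have vz: "vfield u t z = (complex_of_real a0 * \<i> + complex_of_real a1 / 2) * z"
    by (simp add: vfield_def a0_def a1_def \<theta>_def algebra_simps)
  have imv: "Im (vfield u t z / z) = a0" using z by (simp add: vz)
  define A where "A = Aof u t \<theta>"
  define B where "B = b0 + 2 * a0 * a1"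
  have LHS: "euler_lhs u t z = z * (complex_of_real A + \<i> * complex_of_real B)"
    unfolding euler_lhs_def VD FD
    apply (subst Dv_def) 
    unfolding imv
    apply (simp add: vz A_def B_def Aof_def a0_def a1_def a2_def c1_def \<theta>_def)
    apply (simp add: complex_eq_iff algebra_simps power2_eq_square)
    apply (simp add: field_simps)
    done
  define A' where "A' = (\<lambda>x. dx (dx (dt u)) t x / 2 + dx u t x * dx (dx u) t x / 2 - 2 * u t x * dx u t x
      + (dx u t x * dx (dx u) t x + u t x * dx (dx (dx u)) t x) / 2)"
  have AP: "Aof u t (x + 2*pi) = Aof u t x" for x by (simp add: Aof_def P0 P1 P2 P3)
  have AD: "(Aof u t has_real_derivative A' x) (at x)" for x
    unfolding Aof_def[abs_def] A'_def
    apply (rule DERIV_cong[OF _ refl])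
     apply (rule DERIV_cdivide | rule H0 H1 H2 H3 | rule derivative_eq_intros | simp)+
    done
  have GA: "((\<lambda>w. Aof u t (Arg w)) has_derivative (\<lambda>h. A' \<theta> * Im (h / z))) (at z)"
    using arg_comp[OF AP AD z] by (simp add: \<theta>_def)
  have PD: "((\<lambda>w. - ((Re w)^2 + (Im w)^2) / 2 * Aof u t (Arg w)) has_derivative
      (\<lambda>h. - (Re z * Re h + Im z * Im h) * A - ((Re z)^2 + (Im z)^2) / 2 * (A' \<theta> * Im (h / z)))) (at z)"
    apply (rule has_derivative_eq_rhs)
     apply (rule GA | rule derivative_eq_intros | simp)+
    apply (rule ext, simp add: A_def \<theta>_def field_simps)
    done
  have CHt: "B = A' \<theta> / 2" using CH[of \<theta>]
    by (simp add: B_def A'_def b0_def a0_def a1_def field_simps)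
  have r2: "(Re z)^2 + (Im z)^2 \<noteq> 0" using z by (simp add: complex_eq_iff)
  have r2': "2 * (Im z)^2 + 2 * (Re z)^2 \<noteq> 0" "(Im z)^2 + (Re z)^2 \<noteq> 0"
  proof -
    have "0 < (Re z)^2 + (Im z)^2" using r2 by (simp add: add_nonneg_nonneg order_le_neq_trans)
    then show "2 * (Im z)^2 + 2 * (Re z)^2 \<noteq> 0" "(Im z)^2 + (Re z)^2 \<noteq> 0" by linarith+
  qed
  show "((\<lambda>w. - ((Re w)^2 + (Im w)^2) / 2 * Aof u t (Arg w)) has_derivative (\<lambda>h. (- euler_lhs u t z) \<bullet> h)) (at z)"
    apply (rule has_derivative_eq_rhs[OF PD])
    apply (rule ext)
    apply (simp add: LHS inner_complex_def CHt Im_divide)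
    apply (simp add: field_simps r2 r2')
    done
  define r where "r = (Re z)^2 + (Im z)^2"
  have r0: "r \<noteq> 0" using r2 by (simp add: r_def)
  have zz: "Re z = 0 \<longrightarrow> Im z \<noteq> 0" using z by (auto simp: complex_eq_iff)
  have RD: "((\<lambda>w. 1 / ((Re w)^2 + (Im w)^2)^2) has_derivative (\<lambda>h. -4 * (Re z * Re h + Im z * Im h) / r^3)) (at z)"
    apply (rule has_derivative_eq_rhs)
     apply (rule derivative_eq_intros | simp add: zz)+
    apply (rule ext, simp add: r_def[symmetric])
    apply (simp add: field_simps r0 power2_eq_square power3_eq_cube)
    done
  have e: "(\<lambda>w. complex_of_real (1 / norm w ^ 4) * vfield u t w) = (\<lambda>w. complex_of_real (1 / ((Re w)^2 + (Im w)^2)^2) * vfield u t w)"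
  proof (rule ext)
    fix w :: complex
    have "norm w ^ 4 = ((Re w)^2 + (Im w)^2)^2" 
    proof -
      have "norm w ^ 4 = (norm w ^ 2)^2" by simp
      then show ?thesis by (simp only: cmod_power2)
    qed
    then show "complex_of_real (1 / norm w ^ 4) * vfield u t w = complex_of_real (1 / ((Re w)^2 + (Im w)^2)^2) * vfield u t w" by simp
  qed
  have i1: "Im (1 / z) = - Im z / r" by (simp add: r_def Im_divide)
  have i2: "Im (\<i> / z) = Re z / r" by (simp add: r_def Im_divide)
  define DR where "DR = (\<lambda>h. complex_of_real (-4 * (Re z * Re h + Im z * Im h) / r^3) * vfield u t z + complex_of_real (1 / r^2) * Dv h)"
  have DRh: "((\<lambda>w. complex_of_real (1 / ((Re w)^2 + (Im w)^2)^2) * vfield u t w) has_derivative DR) (at z)"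
    unfolding DR_def
    apply (rule has_derivative_eq_rhs)
     apply (rule has_derivative_mult[OF has_derivative_of_real[OF RD] Dv])
    apply (rule ext, simp add: r_def algebra_simps)
    done
  have FR: "frechet_derivative (\<lambda>w. complex_of_real (1 / norm w ^ 4) * vfield u t w) (at z) = DR"
    unfolding e using DRh frechet_derivative_at by metis
  show "divergence (\<lambda>w. complex_of_real (1 / norm w ^ 4) * vfield u t w) z = 0"
  proof -
    have f1: "Re z * Re (vfield u t z) + Im z * Im (vfield u t z) = r * a1 / 2"
      by (simp add: vz r_def algebra_simps power2_eq_square)
    have f2: "Re (Dv 1) + Im (Dv \<i>) = 2 * a1"
    proof -
      have "Re (Dv 1) + Im (Dv \<i>) = a1 + a1 * ((Re z)^2 + (Im z)^2) / r"
        unfolding Dv_def by (simp add: i1 i2 field_simps r0 power2_eq_square)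
      then show ?thesis using r0 zz by (simp add: r_def)
    qed
    have "divergence (\<lambda>w. complex_of_real (1 / norm w ^ 4) * vfield u t w) z
        = -4 / r^3 * (Re z * Re (vfield u t z) + Im z * Im (vfield u t z)) + (Re (Dv 1) + Im (Dv \<i>)) / r^2"
      unfolding divergence_def FR DR_def by (simp add: algebra_simps add_divide_distrib diff_divide_distrib)
    also have "\<dots> = 0" unfolding f1 f2 using r0 by (simp add: field_simps power3_eq_cube power2_eq_square)
    finally show ?thesis .
  qed
qed

lemma per_deriv:
  fixes g :: "real \<Rightarrow> real"
  assumes per: "\<And>x. g (x + 2*pi) = g x" and der: "\<And>x. (g has_real_derivative g' x) (at x)"
  shows "g' (x + 2*pi) = g' x"
proof -
  have "((\<lambda>y. g (y + 2*pi)) has_real_derivative g' (x + 2*pi)) (at x)"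
    using der[of "x + 2*pi"] DERIV_shift by blast
  then have "(g has_real_derivative g' (x + 2*pi)) (at x)" using per by simp
  then show ?thesis using der[of x] DERIV_unique by blast
qed

lemma deriv_eq_on_Ico:
  fixes f g :: "real \<Rightarrow> real"
  assumes t: "0 \<le> t" "t < T"
    and f: "(f has_real_derivative a) (at t)" and g: "(g has_real_derivative b) (at t)"
    and eq: "\<And>s. 0 \<le> s \<Longrightarrow> s < T \<Longrightarrow> f s = g s"
  shows "a = b"
proof -
  have d: "((\<lambda>s. f s - g s) has_real_derivative a - b) (at t within {0..<T})"
    using DERIV_diff[OF f g] has_field_derivative_at_within by blast
  have d0: "((\<lambda>s. f s - g s) has_real_derivative 0) (at t within {0..<T})"
  proof (rule has_field_derivative_transform_within[where f = "\<lambda>_. 0" and d = 1])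
    show "((\<lambda>_. 0) has_real_derivative 0) (at t within {0..<T})" by simp
    show "t \<in> {0..<T}" using t by simp
    show "0 < (1::real)" by simp
    fix s assume "s \<in> {0..<T}" "dist s t < 1"
    then show "0 = f s - g s" using eq by simp
  qed
  have nb: "at t within {0..<T} \<noteq> bot"
  proof -
    have "t islimpt {0..<T}" using t by simp
    then show ?thesis by (simp add: trivial_limit_within)
  qed
  have "a - b = 0"
    using vector_derivative_unique_within[OF nb d[unfolded has_real_derivative_iff_has_vector_derivative]
        d0[unfolded has_real_derivative_iff_has_vector_derivative]] by simp
  then show ?thesis by simp
qed

theorem theorem1p1:
  fixes u :: "real \<Rightarrow> real \<Rightarrow> real" and T :: real
  assumes smooth: "\<exists>U. {0..<T} \<times> UNIV \<subseteq> U \<and> smooth_on U (\<lambda>(t, x). u t x)"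
    and periodic: "\<forall>t\<in>{0..<T}. \<forall>x. u t (x + 2 * pi) = u t x"
    and CH: "\<forall>t\<in>{0..<T}. \<forall>x.
        dt u t x - 1/4 * dx (dx (dt u)) t x + 3 * dx u t x * u t x
        - 1/2 * dx (dx u) t x * dx u t x - 1/4 * dx (dx (dx u)) t x * u t x = 0"
  shows "\<exists>p :: real \<Rightarrow> complex \<Rightarrow> real. \<forall>t\<in>{0..<T}. \<forall>z. z \<noteq> 0 \<longrightarrow>
           (p t has_derivative (\<lambda>h. (- euler_lhs u t z) \<bullet> h)) (at z) \<and>
           divergence (\<lambda>w. complex_of_real (1 / norm w ^ 4) * vfield u t w) z = 0"
proof -
  define F where "F = (\<lambda>(t, x). u t x)"
  obtain U where U: "{0..<T} \<times> UNIV \<subseteq> U" "smooth_on U F" using smooth F_def by blast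
  have oU: "open U" using U(2) by (simp add: smooth_on_def)
  have e1: "((1::real), (0::real)) \<in> Basis" and e2: "((0::real), (1::real)) \<in> Basis"
    by (auto simp: Basis_prod_def)
  have sm: "\<And>ds p. set ds \<subseteq> Basis \<Longrightarrow> p \<in> U \<Longrightarrow> foldr pderiv_dir ds F differentiable (at p)"
    using U(2) by (simp add: smooth_on_def)
  have dF: "F differentiable (at p)" "D1 F differentiable (at p)" "D2 F differentiable (at p)"
    "D1 (D2 F) differentiable (at p)" "D2 (D1 F) differentiable (at p)" "D2 (D2 F) differentiable (at p)"
    "D2 (D2 (D2 F)) differentiable (at p)" "D2 (D1 (D2 F)) differentiable (at p)"
    "D2 (D2 (D1 F)) differentiable (at p)"
    if "p \<in> U" for p
    using sm[OF _ that, of "[]"] sm[OF _ that, of "[(1,0)]"] sm[OF _ that, of "[(0,1)]"]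
      sm[OF _ that, of "[(1,0),(0,1)]"] sm[OF _ that, of "[(0,1),(1,0)]"] sm[OF _ that, of "[(0,1),(0,1)]"]
      sm[OF _ that, of "[(0,1),(0,1),(0,1)]"] sm[OF _ that, of "[(0,1),(1,0),(0,1)]"]
      sm[OF _ that, of "[(0,1),(0,1),(1,0)]"] e1 e2 by auto
  have Fu: "F (s, y) = u s y" for s y by (simp add: F_def)
  have sym: "D1 (D2 F) p = D2 (D1 F) p" if "p \<in> U" for p
  proof -
    obtain s y where p: "p = (s, y)" by fastforce
    show ?thesis unfolding p
      by (rule schwarz[OF oU that[unfolded p]])
        (use dF that p in \<open>simp_all add: differentiable_imp_continuous_within\<close>)
  qed
  have inU: "(t, y) \<in> U" if "0 \<le> t" "t < T" for t y using U(1) that by auto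
  have dxu: "dx u s y = D2 F (s, y)" if "(s, y) \<in> U" for s y
    unfolding dx_def using pd2[OF dF(1)[OF that]] by (simp add: Fu DERIV_imp_deriv)
  have per_facts: "((\<lambda>y. u t y) has_real_derivative dx u t x) (at x) \<and>
      ((\<lambda>y. dx u t y) has_real_derivative dx (dx u) t x) (at x) \<and>
      ((\<lambda>y. dx (dx u) t y) has_real_derivative dx (dx (dx u)) t x) (at x) \<and>
      ((\<lambda>y. dt (dx u) t y) has_real_derivative dx (dx (dt u)) t x) (at x) \<and>
      ((\<lambda>s. u s x) has_real_derivative dt u t x) (at t) \<and>
      ((\<lambda>s. dx u s x) has_real_derivative dt (dx u) t x) (at t)"
    if t: "0 \<le> t" "t < T" for t x
  proof -
    have U': "\<And>y. (t, y) \<in> U" using inU t by blast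
    have E0: "(\<lambda>y. u t y) = (\<lambda>y. F (t, y))" by (simp add: Fu)
    have E1: "(\<lambda>y. dx u t y) = (\<lambda>y. D2 F (t, y))"
    proof
      fix y show "dx u t y = D2 F (t, y)" by (rule dxu[OF U'])
    qed
    have E2: "(\<lambda>y. dx (dx u) t y) = (\<lambda>y. D2 (D2 F) (t, y))"
    proof
      fix y
      have "dx (dx u) t y = deriv (\<lambda>y. dx u t y) y" unfolding dx_def[of "dx u"] ..
      also have "\<dots> = deriv (\<lambda>y. D2 F (t, y)) y" unfolding E1 ..
      also have "\<dots> = D2 (D2 F) (t, y)" by (rule DERIV_imp_deriv[OF pd2[OF dF(3)[OF U']]])
      finally show "dx (dx u) t y = D2 (D2 F) (t, y)" .
    qed
    have E3: "dx (dx (dx u)) t x = D2 (D2 (D2 F)) (t, x)"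
    proof -
      have "dx (dx (dx u)) t x = deriv (\<lambda>y. dx (dx u) t y) x" unfolding dx_def[of "dx (dx u)"] ..
      also have "\<dots> = deriv (\<lambda>y. D2 (D2 F) (t, y)) x" unfolding E2 ..
      also have "\<dots> = D2 (D2 (D2 F)) (t, x)" by (rule DERIV_imp_deriv[OF pd2[OF dF(6)[OF U']]])
      finally show ?thesis .
    qed
    have Edt: "(\<lambda>y. dt u t y) = (\<lambda>y. D1 F (t, y))"
    proof
      fix y
      have "dt u t y = deriv (\<lambda>s. F (s, y)) t" unfolding dt_def Fu ..
      also have "\<dots> = D1 F (t, y)" by (rule DERIV_imp_deriv[OF pd1[OF dF(1)[OF U']]])
      finally show "dt u t y = D1 F (t, y)" .
    qed
    have Edxdt: "(\<lambda>y. dx (dt u) t y) = (\<lambda>y. D2 (D1 F) (t, y))"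
    proof
      fix y
      have "dx (dt u) t y = deriv (\<lambda>y. dt u t y) y" unfolding dx_def[of "dt u"] ..
      also have "\<dots> = deriv (\<lambda>y. D1 F (t, y)) y" unfolding Edt ..
      also have "\<dots> = D2 (D1 F) (t, y)" by (rule DERIV_imp_deriv[OF pd2[OF dF(2)[OF U']]])
      finally show "dx (dt u) t y = D2 (D1 F) (t, y)" .
    qed
    have E221: "dx (dx (dt u)) t x = D2 (D2 (D1 F)) (t, x)"
    proof -
      have "dx (dx (dt u)) t x = deriv (\<lambda>y. dx (dt u) t y) x" unfolding dx_def[of "dx (dt u)"] ..
      also have "\<dots> = deriv (\<lambda>y. D2 (D1 F) (t, y)) x" unfolding Edxdt ..
      also have "\<dots> = D2 (D2 (D1 F)) (t, x)" by (rule DERIV_imp_deriv[OF pd2[OF dF(5)[OF U']]])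
      finally show ?thesis .
    qed
    have TD: "((\<lambda>s. dx u s y) has_real_derivative D1 (D2 F) (t, y)) (at t)" for y
    proof -
      have "open ((\<lambda>s. (s, y)) -` U)" by (rule continuous_open_vimage[OF oU]) (auto intro!: continuous_intros)
      then have "\<forall>\<^sub>F s in nhds t. s \<in> (\<lambda>s. (s, y)) -` U" using U'[of y] by (intro eventually_nhds_in_open) auto
      then have ev: "eventually (\<lambda>s. (s, y) \<in> U) (nhds t)" by simp
      have ev2: "eventually (\<lambda>s. D2 F (s, y) = dx u s y) (nhds t)"
        using ev by eventually_elim (rule dxu[symmetric])
      show ?thesis using pd1[OF dF(3)[OF U'[of y]]] DERIV_cong_ev[OF refl ev2 refl] by blast
    qed
    have Edtdx: "(\<lambda>y. dt (dx u) t y) = (\<lambda>y. D1 (D2 F) (t, y))"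
    proof
      fix y
      have "dt (dx u) t y = deriv (\<lambda>s. dx u s y) t" unfolding dt_def ..
      also have "\<dots> = D1 (D2 F) (t, y)" by (rule DERIV_imp_deriv[OF TD])
      finally show "dt (dx u) t y = D1 (D2 F) (t, y)" .
    qed
    have E212: "((\<lambda>y. dt (dx u) t y) has_real_derivative D2 (D2 (D1 F)) (t, x)) (at x)"
    proof -
      have "(\<lambda>y. dt (dx u) t y) = (\<lambda>y. D2 (D1 F) (t, y))" unfolding Edtdx using sym[OF U'] by simp
      then show ?thesis using pd2[OF dF(5)[OF U'[of x]]] by simp
    qed
    show ?thesis
    proof (intro conjI)
      show "((\<lambda>y. u t y) has_real_derivative dx u t x) (at x)"
        unfolding E0 dxu[OF U'] by (rule pd2[OF dF(1)[OF U'[of x]]])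
      show "((\<lambda>y. dx u t y) has_real_derivative dx (dx u) t x) (at x)"
        unfolding E1 E2 by (rule pd2[OF dF(3)[OF U'[of x]]])
      show "((\<lambda>y. dx (dx u) t y) has_real_derivative dx (dx (dx u)) t x) (at x)"
        unfolding E2 E3 by (rule pd2[OF dF(6)[OF U'[of x]]])
      show "((\<lambda>y. dt (dx u) t y) has_real_derivative dx (dx (dt u)) t x) (at x)"
        unfolding E221 by (rule E212)
      have "(\<lambda>s. u s x) = (\<lambda>s. F (s, x))" by (simp add: Fu)
      moreover have "dt u t x = D1 F (t, x)" using fun_cong[OF Edt, of x] by simp
      ultimately show "((\<lambda>s. u s x) has_real_derivative dt u t x) (at t)"
        using pd1[OF dF(1)[OF U'[of x]]] by simp
      show "((\<lambda>s. dx u s x) has_real_derivative dt (dx u) t x) (at t)"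
        using TD[of x] fun_cong[OF Edtdx, of x] by simp
    qed
  qed
  have per1: "dx u t (x + 2*pi) = dx u t x" if t: "0 \<le> t" "t < T" for t x
    by (rule per_deriv[of "u t"]) (use periodic t per_facts[OF t] in auto)
  show ?thesis
  proof (intro exI[of _ "\<lambda>t w. - ((Re w)^2 + (Im w)^2) / 2 * Aof u t (Arg w)"] ballI allI impI)
    fix t z assume t: "t \<in> {0..<T}" and z: "(z::complex) \<noteq> 0"
    then have t': "0 \<le> t" "t < T" by auto
    note pf = per_facts[OF t']
    have P2: "dx (dx u) t (x + 2*pi) = dx (dx u) t x" for x
      by (rule per_deriv[of "dx u t"]) (use per1 t' pf in auto)
    have P3: "dt (dx u) t (x + 2*pi) = dt (dx u) t x" for x
      by (rule deriv_eq_on_Ico[OF t', of "\<lambda>s. dx u s (x + 2*pi)" _ "\<lambda>s. dx u s x"])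
         (use pf per1 in auto)
    have C: "((\<lambda>w. - ((Re w)^2 + (Im w)^2) / 2 * Aof u t (Arg w)) has_derivative (\<lambda>h. (- euler_lhs u t z) \<bullet> h)) (at z)"
      "divergence (\<lambda>w. complex_of_real (1 / norm w ^ 4) * vfield u t w) z = 0"
      using core[OF z pf[THEN conjunct1] pf[THEN conjunct2, THEN conjunct1]
          pf[THEN conjunct2, THEN conjunct2, THEN conjunct1]
          pf[THEN conjunct2, THEN conjunct2, THEN conjunct2, THEN conjunct1]
          pf[THEN conjunct2, THEN conjunct2, THEN conjunct2, THEN conjunct2, THEN conjunct1]
          pf[THEN conjunct2, THEN conjunct2, THEN conjunct2, THEN conjunct2, THEN conjunct2]
          periodic[rule_format, OF t] per1[OF t'] P2 P3 CH[rule_format, OF t]] by auto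
    then show "((\<lambda>w. - ((Re w)^2 + (Im w)^2) / 2 * Aof u t (Arg w)) has_derivative (\<lambda>h. (- euler_lhs u t z) \<bullet> h)) (at z) \<and>
        divergence (\<lambda>w. complex_of_real (1 / norm w ^ 4) * vfield u t w) z = 0" by simp
  qed
qed

end
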